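(* Let $r \ge 0$ be an integer and let $G$ be a finite simple graph with at least $3$ vertices such that $\delta(G) \ge (r+1)\widetilde{\alpha}(G) + 3r$. Then $G$ contains $r+1$ pairwise edge-disjoint Hamilton cycles.
   Context: $\delta(G)$ denotes the minimum degree of $G$. For disjoint vertex sets $S,T$, $E(S,T)$ is the set of edges with one end in $S$ and one in $T$. An $(s,t)$-bipartite-hole in $G$ consists of two disjoint sets of vertices $S$ and $T$ with $|S|=s$, $|T|=t$ and $E(S,T)=\emptyset$. The bipartite-hole-number $\widetilde{\alpha}(G)$ is the least integer $r'$ which can be written as $r'=s+t-1$ for some positive integers $s,t$ such that $G$ contains no $(s,t)$-bipartite-hole. *)

theory Defs
  imports Main
begin

definition simple_graph :: "'a set \<Rightarrow> ('a \<Rightarrow> 'a \<Rightarrow> bool) \<Rightarrow> bool" where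
  "simple_graph V E \<longleftrightarrow> finite V \<and> (\<forall>x y. E x y \<longrightarrow> x \<in> V \<and> y \<in> V)
     \<and> (\<forall>x y. E x y \<longrightarrow> E y x) \<and> (\<forall>x. \<not> E x x)"

definition degree :: "'a set \<Rightarrow> ('a \<Rightarrow> 'a \<Rightarrow> bool) \<Rightarrow> 'a \<Rightarrow> nat" where
  "degree V E v = card {u \<in> V. E v u}"

text \<open>Minimum degree (for nonempty V).\<close>
definition min_degree :: "'a set \<Rightarrow> ('a \<Rightarrow> 'a \<Rightarrow> bool) \<Rightarrow> nat" where
  "min_degree V E = Min (degree V E ` V)"

definition has_bip_hole :: "'a set \<Rightarrow> ('a \<Rightarrow> 'a \<Rightarrow> bool) \<Rightarrow> nat \<Rightarrow> nat \<Rightarrow> bool" where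
  "has_bip_hole V E s t \<longleftrightarrow> (\<exists>S T. S \<subseteq> V \<and> T \<subseteq> V \<and> S \<inter> T = {} \<and>
      card S = s \<and> card T = t \<and> (\<forall>x\<in>S. \<forall>y\<in>T. \<not> E x y))"

definition bip_hole_number :: "'a set \<Rightarrow> ('a \<Rightarrow> 'a \<Rightarrow> bool) \<Rightarrow> nat" where
  "bip_hole_number V E = (LEAST r'. \<exists>s t. s \<ge> 1 \<and> t \<ge> 1 \<and> r' = s + t - 1 \<and>
      \<not> has_bip_hole V E s t)"

definition hamilton_cycle :: "'a set \<Rightarrow> ('a \<Rightarrow> 'a \<Rightarrow> bool) \<Rightarrow> 'a list \<Rightarrow> bool" where
  "hamilton_cycle V E xs \<longleftrightarrow> distinct xs \<and> set xs = V \<and> length xs \<ge> 3 \<and>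
     (\<forall>i < length xs. E (xs ! i) (xs ! ((i + 1) mod length xs)))"

definition cycle_edges :: "'a list \<Rightarrow> 'a set set" where
  "cycle_edges xs = {{xs ! i, xs ! ((i + 1) mod length xs)} | i. i < length xs}"

end

theory Submission
  imports Defs
begin


definition cycE :: "('a \<Rightarrow> 'a \<Rightarrow> bool) \<Rightarrow> 'a list \<Rightarrow> bool" where
  "cycE E xs \<longleftrightarrow> (\<forall>i < length xs. E (xs ! i) (xs ! ((i + 1) mod length xs)))"

lemma cycE_iff:
  assumes "xs \<noteq> []"
  shows "cycE E xs \<longleftrightarrow> successively E xs \<and> E (last xs) (hd xs)"
proof -
  have "cycE E xs \<longleftrightarrow> (\<forall>i. Suc i < length xs \<longrightarrow> E (xs ! i) (xs ! Suc i)) \<and> E (xs ! (length xs - 1)) (xs ! 0)"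
    unfolding cycE_def
  proof safe
    fix i assume h: "\<forall>i<length xs. E (xs ! i) (xs ! ((i + 1) mod length xs))" "Suc i < length xs"
    then show "E (xs ! i) (xs ! Suc i)" using h(1)[rule_format, of i] by simp
  next
    assume h: "\<forall>i<length xs. E (xs ! i) (xs ! ((i + 1) mod length xs))"
    then show "E (xs ! (length xs - 1)) (xs ! 0)" using assms h[rule_format, of "length xs - 1"] by simp
  next
    fix i assume h: "\<forall>i. Suc i < length xs \<longrightarrow> E (xs ! i) (xs ! Suc i)" "E (xs ! (length xs - 1)) (xs ! 0)" "i < length xs"
    show "E (xs ! i) (xs ! ((i + 1) mod length xs))"
    proof (cases "Suc i < length xs")
      case True then show ?thesis using h by simp
    next
      case False then have "Suc i = length xs" using h(3) by simp
      then have "(i+1) mod length xs = 0" "i = length xs - 1" by auto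
      then show ?thesis using h(2) by simp
    qed
  qed
  also have "\<dots> \<longleftrightarrow> successively E xs \<and> E (last xs) (hd xs)"
    using assms by (simp add: successively_conv_nth last_conv_nth hd_conv_nth)
  finally show ?thesis .
qed

lemma cycE_rotate:
  assumes "cycE E xs"
  shows "cycE E (rotate k xs)"
  unfolding cycE_def
proof (intro allI impI)
  fix i assume i: "i < length (rotate k xs)"
  let ?n = "length xs"
  have n: "?n > 0" using i by (cases xs) auto
  have "rotate k xs ! i = xs ! ((k + i) mod ?n)" using i by (simp add: nth_rotate)
  moreover have "rotate k xs ! ((i + 1) mod length (rotate k xs)) = xs ! (((k + i) mod ?n + 1) mod ?n)"
    using n by (simp add: nth_rotate mod_Suc_eq mod_add_right_eq)
  ultimately show "E (rotate k xs ! i) (rotate k xs ! ((i + 1) mod length (rotate k xs)))"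
    using assms n unfolding cycE_def by simp
qed

definition walk :: "('a \<Rightarrow> 'a \<Rightarrow> bool) \<Rightarrow> 'a set \<Rightarrow> 'a list \<Rightarrow> bool" where
  "walk E W xs \<longleftrightarrow> xs \<noteq> [] \<and> set xs \<subseteq> W \<and> successively E xs"

lemma walk_distinct:
  assumes "walk E W xs"
  shows "\<exists>ys. walk E W ys \<and> distinct ys \<and> hd ys = hd xs \<and> last ys = last xs"
  using assms
proof (induction "length xs" arbitrary: xs rule: less_induct)
  case less
  show ?case
  proof (cases "distinct xs")
    case True then show ?thesis using less by blast
  next
    case False
    then obtain a b c y where xs: "xs = a @ [y] @ b @ [y] @ c" using not_distinct_decomp by blast
    let ?z = "a @ [y] @ c"
    have s: "successively E ((a @ [y] @ b) @ ([y] @ c))" using less(2) unfolding xs walk_def by simp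
    then have s1: "successively E (a @ [y] @ b)" and s2: "successively E ([y] @ c)"
      unfolding successively_append_iff by blast+
    have s3: "successively E (a @ [y])" using s1 unfolding append_assoc[symmetric] successively_append_iff by blast
    have "successively E ((a @ [y]) @ c)"
      unfolding successively_append_iff using s2 s3 by (cases c) (auto simp: successively_append_iff)
    then have "successively E (a @ [y] @ c)" by simp
    then have "walk E W ?z" using less(2) unfolding xs walk_def by auto
    moreover have "length ?z < length xs" using xs by simp
    moreover have "hd ?z = hd xs" "last ?z = last xs" using xs by (cases a; simp; cases c; simp)+
    ultimately show ?thesis using less(1) by metis
  qed
qed

lemma longest_ex:
  assumes "P xs0" "\<forall>xs. P xs \<longrightarrow> length xs \<le> b"
  shows "\<exists>xs. P xs \<and> (\<forall>ys. P ys \<longrightarrow> length ys \<le> length xs)"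
proof -
  have "\<exists>n. (\<exists>xs. P xs \<and> length xs = n) \<and> (\<forall>m. (\<exists>xs. P xs \<and> length xs = m) \<longrightarrow> m \<le> n)"
    by (rule Nat.ex_has_greatest_nat[where k="length xs0" and b=b]) (use assms in auto)
  then show ?thesis by blast
qed



lemma hole_sym:
  assumes "has_bip_hole V E s t" "\<forall>x y. E x y \<longrightarrow> E y x"
  shows "has_bip_hole V E t s"
proof -
  obtain S T where h: "S \<subseteq> V" "T \<subseteq> V" "S \<inter> T = {}" "card S = s" "card T = t" "\<forall>x\<in>S. \<forall>y\<in>T. \<not> E x y"
    using assms(1) unfolding has_bip_hole_def by blast
  have "T \<subseteq> V \<and> S \<subseteq> V \<and> T \<inter> S = {} \<and> card T = t \<and> card S = s \<and> (\<forall>x\<in>T. \<forall>y\<in>S. \<not> E x y)"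
    using h assms(2) by blast
  then show ?thesis unfolding has_bip_hole_def by blast
qed

lemma hole_from:
  assumes "finite X" "finite Y" "X \<subseteq> V" "Y \<subseteq> V" "X \<inter> Y = {}" "s \<le> card X" "t \<le> card Y"
    "\<forall>x\<in>X. \<forall>y\<in>Y. \<not> E x y"
  shows "has_bip_hole V E s t"
proof -
  obtain S where S: "S \<subseteq> X" "card S = s" using obtain_subset_with_card_n[OF assms(6)] by metis
  obtain T where T: "T \<subseteq> Y" "card T = t" using obtain_subset_with_card_n[OF assms(7)] by metis
  have "S \<subseteq> V \<and> T \<subseteq> V \<and> S \<inter> T = {} \<and> card S = s \<and> card T = t \<and> (\<forall>x\<in>S. \<forall>y\<in>T. \<not> E x y)"
    using S T assms(3,4,5,8) by blast
  then show ?thesis unfolding has_bip_hole_def by blast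
qed

lemma hole_indep:
  assumes "finite X" "finite Y" "X \<subseteq> V" "Y \<subseteq> V" "X \<inter> Y = {}"
    "\<forall>x\<in>X. \<forall>y\<in>X. x \<noteq> y \<longrightarrow> \<not> E x y" "\<forall>x\<in>X. \<forall>y\<in>Y. \<not> E x y"
    "s \<le> card X" "s + t \<le> card X + card Y"
  shows "has_bip_hole V E s t"
proof -
  obtain S where S: "S \<subseteq> X" "card S = s" using obtain_subset_with_card_n[OF assms(8)] by metis
  have fS: "finite S" using S assms(1) finite_subset by blast
  have "card ((X - S) \<union> Y) = card (X - S) + card Y"
    using assms by (intro card_Un_disjoint) auto
  also have "card (X - S) = card X - s" using S fS by (simp add: card_Diff_subset)
  finally have c: "t \<le> card ((X - S) \<union> Y)" using assms(8,9) by simp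
  show ?thesis
  proof (rule hole_from[OF fS _ _ _ _ _ c])
    show "finite (X - S \<union> Y)" using assms(1,2) by blast
    show "S \<subseteq> V" using S assms(3) by blast
    show "X - S \<union> Y \<subseteq> V" using assms(3,4) by blast
    show "S \<inter> (X - S \<union> Y) = {}" using S assms(5) by blast
    show "s \<le> card S" using S by simp
    show "\<forall>x\<in>S. \<forall>y\<in>X - S \<union> Y. \<not> E x y"
    proof (intro ballI)
      fix x y assume xy: "x \<in> S" "y \<in> X - S \<union> Y"
      have xX: "x \<in> X" using xy S by blast
      show "\<not> E x y"
      proof (cases "y \<in> Y")
        case True then show ?thesis using assms(7) xX by blast
      next
        case False then have "y \<in> X" "x \<noteq> y" using xy by auto
        then show ?thesis using assms(6) xX by blast
      qed
    qed
  qed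
qed



declare rotate_Suc[simp del]

lemma succ_sym:
  assumes "\<forall>x y. E x y \<longrightarrow> E y x" "successively E xs"
  shows "successively E (rev xs)"
  using assms(2) by (simp add: successively_rev) (erule successively_mono, use assms(1) in blast)

lemma rot_facts:
  assumes "i < length c"
  shows "rotate (i+1) c \<noteq> []" "hd (rotate (i+1) c) = c ! ((i+1) mod length c)"
    "last (rotate (i+1) c) = c ! i" "set (rotate (i+1) c) = set c" "length (rotate (i+1) c) = length c"
proof -
  have n: "length c > 0" using assms by (cases c) auto
  show "rotate (i+1) c \<noteq> []" using assms by (cases c) auto
  show "hd (rotate (i+1) c) = c ! ((i+1) mod length c)"
    using n by (simp add: hd_conv_nth nth_rotate)
  have "last (rotate (i+1) c) = rotate (i+1) c ! (length c - 1)"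
    using n by (simp add: last_conv_nth)
  also have "\<dots> = c ! ((i + 1 + (length c - 1)) mod length c)" using n by (simp add: nth_rotate)
  also have "(i + 1 + (length c - 1)) = i + length c" using n by simp
  finally show "last (rotate (i+1) c) = c ! i" using assms by simp
  show "set (rotate (i+1) c) = set c" by simp
  show "length (rotate (i+1) c) = length c" by simp
qed

lemma surgery1:
  assumes cyc: "cycE E c" "distinct c" and q: "walk E W q" "distinct q" "set q \<inter> set c = {}"
    and i: "i < length c" and e1: "E (c!i) (hd q)" and e2: "E (last q) (c!((i+1) mod length c))"
  shows "\<exists>c'. cycE E c' \<and> distinct c' \<and> set c' = set c \<union> set q \<and> length c' = length c + length q"
proof -
  let ?r = "rotate (i+1) c"
  note rf = rot_facts[OF i]
  have cr: "cycE E ?r" using cycE_rotate[OF cyc(1)] .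
  then have sr: "successively E ?r" using cycE_iff[OF rf(1)] by blast
  have qne: "q \<noteq> []" and sq: "successively E q" using q unfolding walk_def by auto
  let ?c = "?r @ q"
  have "successively E ?c" using sr sq e1 rf by (simp add: successively_append_iff)
  moreover have "E (last ?c) (hd ?c)" using e2 qne rf by simp
  ultimately have "cycE E ?c" using cycE_iff[of ?c] rf(1) by simp
  moreover have "distinct ?c" using cyc(2) q(2,3) rf by auto
  ultimately show ?thesis using rf by (intro exI[of _ ?c]) auto
qed

lemma mod_lemma:
  fixes i j m :: nat
  assumes "i < m" "j < m"
  shows "(i + 1 + (j + m - (i + 1)) mod m) mod m = j"
proof -
  have "(i + 1 + (j + m - (i + 1)) mod m) mod m = (i + 1 + (j + m - (i + 1))) mod m"
    by (metis mod_add_right_eq)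
  also have "i + 1 + (j + m - (i + 1)) = j + m" using assms by simp
  finally show ?thesis using assms by simp
qed

lemma surgery2:
  assumes sym: "\<forall>x y. E x y \<longrightarrow> E y x"
    and cyc: "cycE E c" "distinct c" and q: "walk E W q" "distinct q" "set q \<inter> set c = {}"
    and i: "i < length c" and j: "j < length c" and ij: "i \<noteq> j"
    and e1: "E (c!i) (hd q)" and e2: "E (last q) (c!j)"
    and e3: "E (c!((i+1) mod length c)) (c!((j+1) mod length c))"
  shows "\<exists>c'. cycE E c' \<and> distinct c' \<and> set c' = set c \<union> set q \<and> length c' = length c + length q"
proof -
  define m where "m = length c"
  let ?r = "rotate (i+1) c"
  note rf = rot_facts[OF i]
  have cr: "cycE E ?r" using cycE_rotate[OF cyc(1)] .
  then have sr: "successively E ?r" using cycE_iff[OF rf(1)] by blast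
  have qne: "q \<noteq> []" and sq: "successively E q" using q unfolding walk_def by auto
  define j' where "j' = (j + m - (i + 1)) mod m"
  have m0: "m > 0" using i m_def by (cases c) auto
  have j'm: "j' < m" using m0 j'_def by simp
  have "?r ! j' = c ! ((i+1+j') mod length c)" by (rule nth_rotate) (use j'm m_def in simp)
  then have rj: "?r ! j' = c ! j" using mod_lemma[OF i j] unfolding m_def j'_def by simp
  have "j' \<noteq> m - 1"
  proof
    assume "j' = m - 1"
    then have "?r ! j' = c ! i" using rf(3) rf(1) m_def by (simp add: last_conv_nth)
    then have "c ! i = c ! j" using rj by simp
    then show False using cyc(2) i j ij nth_eq_iff_index_eq by blast
  qed
  then have j1: "j' + 1 < m" using j'm by simp
  have rj1: "?r ! (j' + 1) = c ! ((j + 1) mod m)"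
  proof -
    have "?r ! (j' + 1) = c ! ((i + 1 + (j' + 1)) mod m)" unfolding m_def by (rule nth_rotate) (use j1 m_def in simp)
    also have "(i + 1 + (j' + 1)) mod m = ((i + 1 + j') mod m + 1) mod m"
      by (simp add: mod_Suc_eq)
    also have "(i + 1 + j') mod m = j" using mod_lemma[OF i j] unfolding m_def j'_def .
    finally show ?thesis by (simp add: m_def)
  qed
  define a where "a = take (j'+1) ?r"
  define b where "b = drop (j'+1) ?r"
  have ab: "a @ b = ?r" unfolding a_def b_def by simp
  have ane: "a \<noteq> []" and bne: "b \<noteq> []" using j1 rf(5) m_def unfolding a_def b_def by auto
  have ha: "hd a = c ! ((i+1) mod m)" using rf(2) ane unfolding a_def m_def by simp
  have "last a = a ! j'" using ane j1 rf(5) m_def unfolding a_def by (simp add: last_conv_nth)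
  then have la: "last a = c ! j" using rj j1 rf(5) m_def unfolding a_def by simp
  have hb: "hd b = c ! ((j+1) mod m)" using rj1 j1 rf(5) m_def unfolding b_def by (simp add: hd_conv_nth)
  have lb: "last b = c ! i" using rf(3) bne ab by (metis last_appendR)
  have sa: "successively E a" and sb: "successively E b" using sr ab successively_append_iff by metis+
  have sra: "successively E (rev a)" using succ_sym[OF sym sa] .
  let ?c = "q @ (rev a @ b)"
  have "successively E (rev a @ b)"
    using sra sb e3 ane bne ha hb unfolding m_def by (simp add: successively_append_iff last_rev)
  then have "successively E ?c"
    using sq qne ane e2 la by (simp add: successively_append_iff hd_rev)
  moreover have "E (last ?c) (hd ?c)" using e1 bne qne lb sym by simp
  ultimately have "cycE E ?c" using cycE_iff[of ?c] qne by simp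
  moreover have "distinct (rev a @ b)"
  proof -
    have "distinct (a @ b)" using cyc(2) ab by (simp add: distinct_rotate)
    then show ?thesis by simp
  qed
  moreover have "set (rev a @ b) = set c" using ab rf(4) by (metis set_append set_rev)
  moreover have "length (rev a @ b) = length c" using ab rf(5) by (metis length_append length_rev)
  ultimately show ?thesis using q(2,3) by (intro exI[of _ ?c]) auto
qed



lemma walk_join:
  assumes sym: "\<forall>x y. E x y \<longrightarrow> E y x" and p1: "walk E W p1" and p2: "walk E W p2"
    and h: "hd p1 = hd p2"
  shows "\<exists>q. walk E W q \<and> hd q = last p1 \<and> last q = last p2"
proof -
  obtain v p2' where p2e: "p2 = v # p2'" using p2 unfolding walk_def by (cases p2) auto
  have s1: "successively E (rev p1)" using succ_sym[OF sym] p1 unfolding walk_def by blast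
  have p1ne: "p1 \<noteq> []" using p1 unfolding walk_def by blast
  show ?thesis
  proof (cases "p2' = []")
    case True
    then have "last p2 = hd p1" using p2e h by simp
    then show ?thesis using p1 s1 p1ne unfolding walk_def
      by (intro exI[of _ "rev p1"]) (auto simp: hd_rev last_rev)
  next
    case False
    have s2: "successively E p2'" and e: "E v (hd p2')"
      using p2 p2e False unfolding walk_def by (auto simp: successively_Cons)
    have "successively E (rev p1 @ p2')"
      using s1 s2 e h p2e p1ne by (simp add: successively_append_iff last_rev)
    moreover have "set (rev p1 @ p2') \<subseteq> W" using p1 p2 p2e unfolding walk_def by auto
    ultimately show ?thesis using p1ne False p2e unfolding walk_def
      by (intro exI[of _ "rev p1 @ p2'"]) (auto simp: hd_rev)
  qed
qed

lemma exists_cycle: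
  assumes sg: "simple_graph V E" and deg2: "\<forall>v\<in>V. 2 \<le> degree V E v" and ne: "v0 \<in> V"
  shows "\<exists>xs. distinct xs \<and> 3 \<le> length xs \<and> set xs \<subseteq> V \<and> cycE E xs"
proof -
  have fin: "finite V" and sym: "\<forall>x y. E x y \<longrightarrow> E y x" and irr: "\<forall>x. \<not> E x x"
    using sg unfolding simple_graph_def by auto
  let ?P = "\<lambda>xs. walk E V xs \<and> distinct xs"
  have P0: "?P [v0]" unfolding walk_def using ne by simp
  have bnd: "\<forall>xs. ?P xs \<longrightarrow> length xs \<le> card V"
  proof (intro allI impI)
    fix xs assume "?P xs"
    then have "card (set xs) \<le> card V" "card (set xs) = length xs"
      using fin unfolding walk_def by (simp add: card_mono, simp add: distinct_card)
    then show "length xs \<le> card V" by simp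
  qed
  obtain p where p: "?P p" and pmax: "\<forall>ys. ?P ys \<longrightarrow> length ys \<le> length p"
    using longest_ex[OF P0 bnd] by blast
  have pne: "p \<noteq> []" and pV: "set p \<subseteq> V" and ps: "successively E p" and pd: "distinct p"
    using p unfolding walk_def by auto
  define x0 where "x0 = hd p"
  have x0: "x0 = p ! 0" "x0 \<in> V" using pne pV unfolding x0_def by (auto simp: hd_conv_nth)
  define D where "D = {u\<in>V. E x0 u}"
  have nb: "D \<subseteq> set p"
  proof
    fix u assume u: "u \<in> D"
    show "u \<in> set p"
    proof (rule ccontr)
      assume nu: "u \<notin> set p"
      have "E u (hd p)" using u sym unfolding D_def x0_def by auto
      then have "?P (u # p)" using u nu pne pV ps pd unfolding walk_def D_def
        by (auto simp: successively_Cons)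
      then show False using pmax by fastforce
    qed
  qed
  have cD: "2 \<le> card D" using deg2 x0(2) unfolding degree_def D_def by blast
  have fD: "finite D" using fin unfolding D_def by auto
  obtain u where u: "u \<in> D" "u \<noteq> p ! 1"
  proof (rule ccontr)
    assume "\<not> thesis"
    then have "D \<subseteq> {p ! 1}" using that by blast
    then have "card D \<le> 1" using card_mono[of "{p!1}" D] by simp
    then show False using cD by simp
  qed
  obtain j where j: "j < length p" "p ! j = u" using nb u(1) by (metis in_set_conv_nth subsetD)
  have "j \<noteq> 0"
  proof
    assume "j = 0" then have "E x0 x0" using j u(1) x0(1) unfolding D_def by auto
    then show False using irr by blast
  qed
  then have j2: "2 \<le> j" using j u(2) by (cases j; cases "j - 1") auto
  define xs where "xs = take (j+1) p"
  have xne: "xs \<noteq> []" unfolding xs_def using pne by simp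
  have "successively E xs" using ps unfolding xs_def
    by (metis append_take_drop_id successively_append_iff)
  moreover have "last xs = p ! j"
  proof -
    have "last xs = xs ! j" using j xne unfolding xs_def by (simp add: last_conv_nth)
    then show ?thesis using j unfolding xs_def by simp
  qed
  moreover have "hd xs = x0" using x0 pne unfolding xs_def by (simp add: hd_conv_nth)
  moreover have "E (p ! j) x0" using u j sym unfolding D_def by auto
  ultimately have "cycE E xs" using cycE_iff[OF xne] by simp
  moreover have "distinct xs" using pd unfolding xs_def by simp
  moreover have "3 \<le> length xs" using j j2 unfolding xs_def by simp
  moreover have "set xs \<subseteq> V" using pV unfolding xs_def by (meson set_take_subset subset_trans)
  ultimately show ?thesis by blast
qed



lemma mod_suc_inj:
  fixes i j m :: nat
  assumes "i < m" "j < m" "(i + 1) mod m = (j + 1) mod m"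
  shows "i = j"
proof -
  have "(i + 1) mod m = (if i + 1 = m then 0 else i + 1)" using assms(1) by auto
  moreover have "(j + 1) mod m = (if j + 1 = m then 0 else j + 1)" using assms(2) by auto
  ultimately show ?thesis using assms by (auto split: if_splits)
qed

lemma hamiltonian:
  assumes sg: "simple_graph V E" and cV: "3 \<le> card V" and st: "1 \<le> s" "1 \<le> t"
    and nh: "\<not> has_bip_hole V E s t" and deg: "\<forall>v\<in>V. s + t - 1 \<le> degree V E v"
  shows "\<exists>xs. hamilton_cycle V E xs"
proof -
  have fin: "finite V" and sym: "\<forall>x y. E x y \<longrightarrow> E y x" and irr: "\<forall>x. \<not> E x x"
    and inV: "\<forall>x y. E x y \<longrightarrow> x \<in> V \<and> y \<in> V"
    using sg unfolding simple_graph_def by auto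
  define D where "D v = {u\<in>V. E v u}" for v
  have fD: "finite (D v)" for v using fin unfolding D_def by auto
  have cD: "s + t - 1 \<le> card (D v)" if "v \<in> V" for v using deg that unfolding D_def degree_def by blast
  have deg2: "\<forall>v\<in>V. 2 \<le> degree V E v"
  proof
    fix v assume v: "v \<in> V"
    show "2 \<le> degree V E v"
    proof (cases "s + t \<ge> 3")
      case True then show ?thesis using deg v by fastforce
    next
      case False
      then have s1: "s = 1" "t = 1" using st by auto
      have "D v = V - {v}"
      proof
        show "D v \<subseteq> V - {v}" using irr unfolding D_def by auto
        show "V - {v} \<subseteq> D v"
        proof
          fix u assume u: "u \<in> V - {v}"
          show "u \<in> D v"
          proof (rule ccontr)
            assume "u \<notin> D v"
            then have "\<not> E v u" using u unfolding D_def by auto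
            then have "has_bip_hole V E s t" using s1 u v
              by (intro hole_from[of "{v}" "{u}"]) auto
            then show False using nh by blast
          qed
        qed
      qed
      then have "card (D v) = card V - 1" using v fin by simp
      then show ?thesis using cV unfolding D_def degree_def by simp
    qed
  qed
  have "V \<noteq> {}" using cV by auto
  then obtain v0 where "v0 \<in> V" by blast
  let ?Q = "\<lambda>xs. distinct xs \<and> 3 \<le> length xs \<and> set xs \<subseteq> V \<and> cycE E xs"
  obtain c0 where c0: "?Q c0" using exists_cycle[OF sg deg2 \<open>v0 \<in> V\<close>] by blast
  have bnd: "\<forall>xs. ?Q xs \<longrightarrow> length xs \<le> card V"
  proof (intro allI impI)
    fix xs assume "?Q xs"
    then have "card (set xs) \<le> card V" "card (set xs) = length xs"
      using fin by (simp add: card_mono, simp add: distinct_card)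
    then show "length xs \<le> card V" by simp
  qed
  obtain c where c: "?Q c" and cmax: "\<forall>ys. ?Q ys \<longrightarrow> length ys \<le> length c"
    using longest_ex[OF c0 bnd] by blast
  have cd: "distinct c" and c3: "3 \<le> length c" and cV': "set c \<subseteq> V" and cc: "cycE E c"
    using c by auto
  have "set c = V"
  proof (rule ccontr)
    assume "set c \<noteq> V"
    then obtain v where v: "v \<in> V" "v \<notin> set c" using cV' by blast
    define m where "m = length c"
    define W where "W = V - set c"
    define H where "H = {h. \<exists>p. walk E W p \<and> hd p = v \<and> last p = h}"
    have vH: "v \<in> H" unfolding H_def W_def walk_def using v by (intro CollectI exI[of _ "[v]"]) auto
    have HW: "H \<subseteq> W" unfolding H_def walk_def by auto
    have fH: "finite H" using HW fin unfolding W_def by (meson finite_Diff finite_subset)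
    have clos: "u \<in> H" if a: "h \<in> H" "u \<in> W" "E h u" for h u
    proof -
      obtain p where p: "walk E W p" "hd p = v" "last p = h" using a(1) unfolding H_def by blast
      have "walk E W (p @ [u])" using p a unfolding walk_def by (auto simp: successively_append_iff)
      moreover have "hd (p @ [u]) = v" using p unfolding walk_def by simp
      ultimately show ?thesis unfolding H_def by (intro CollectI exI[of _ "p @ [u]"]) simp
    qed
    have path: "\<exists>q. walk E W q \<and> distinct q \<and> hd q = h1 \<and> last q = h2" if a: "h1 \<in> H" "h2 \<in> H" for h1 h2
    proof -
      obtain p1 where p1: "walk E W p1" "hd p1 = v" "last p1 = h1" using a(1) unfolding H_def by blast
      obtain p2 where p2: "walk E W p2" "hd p2 = v" "last p2 = h2" using a(2) unfolding H_def by blast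
      obtain q where "walk E W q" "hd q = h1" "last q = h2"
        using walk_join[OF sym p1(1) p2(1)] p1 p2 by auto
      then show ?thesis using walk_distinct by metis
    qed
    have qc: "set q \<inter> set c = {}" if "walk E W q" for q using that unfolding walk_def W_def by auto
    have qV: "set q \<subseteq> V" if "walk E W q" for q using that unfolding walk_def W_def by auto
    have longer: False if "cycE E c'" "distinct c'" "set c' = set c \<union> set q" "length c' = length c + length q"
      "walk E W q" for c' q
    proof -
      have "q \<noteq> []" using that(5) unfolding walk_def by auto
      then have "length c' > length c" using that(4) by simp
      moreover have "?Q c'" using that c3 cV' qV[OF that(5)] by auto
      ultimately show False using cmax by fastforce
    qed
    define N where "N = {x \<in> set c. \<exists>h\<in>H. E h x}"
    define sc where "sc i = c ! ((i + 1) mod m)" for i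
    define I where "I = {i. i < m \<and> c ! i \<in> N}"
    define Np where "Np = sc ` I"
    have m0: "m > 0" using c3 unfolding m_def by (cases c) auto
    have F2: "sc i \<notin> N" if iI: "i \<in> I" for i
    proof
      assume "sc i \<in> N"
      then obtain h2 where h2: "h2 \<in> H" "E h2 (sc i)" unfolding N_def by blast
      obtain h1 where h1: "h1 \<in> H" "E h1 (c ! i)" using iI unfolding I_def N_def by blast
      obtain q where q: "walk E W q" "distinct q" "hd q = h1" "last q = h2" using path[OF h1(1) h2(1)] by blast
      have i: "i < length c" using iI unfolding I_def m_def by simp
      show False
        using surgery1[OF cc cd q(1,2) qc[OF q(1)] i] h1 h2 q sym longer[OF _ _ _ _ q(1)]
        unfolding sc_def m_def by blast
    qed
    have F3: "\<not> E (sc i) (sc j)" if ij: "i \<in> I" "j \<in> I" "i \<noteq> j" for i j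
    proof
      assume e3: "E (sc i) (sc j)"
      obtain hx where hx: "hx \<in> H" "E hx (c ! i)" using ij unfolding I_def N_def by blast
      obtain hy where hy: "hy \<in> H" "E hy (c ! j)" using ij unfolding I_def N_def by blast
      obtain q where q: "walk E W q" "distinct q" "hd q = hx" "last q = hy" using path[OF hx(1) hy(1)] by blast
      have i: "i < length c" "j < length c" using ij unfolding I_def m_def by auto
      show False
        using surgery2[OF sym cc cd q(1,2) qc[OF q(1)] i ij(3)] hx hy q sym e3 longer[OF _ _ _ _ q(1)]
        unfolding sc_def m_def by blast
    qed
    have scinj: "inj_on sc I"
    proof (rule inj_onI)
      fix i j assume ij: "i \<in> I" "j \<in> I" "sc i = sc j"
      have "(i + 1) mod m < length c" "(j + 1) mod m < length c" using m0 unfolding m_def by auto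
      then have "(i + 1) mod m = (j + 1) mod m" using ij(3) cd unfolding sc_def by (simp add: nth_eq_iff_index_eq)
      then show "i = j" using mod_suc_inj ij(1,2) unfolding I_def by blast
    qed
    have NI: "N = (\<lambda>i. c ! i) ` I"
    proof
      show "N \<subseteq> (\<lambda>i. c ! i) ` I"
      proof
        fix x assume x: "x \<in> N"
        then obtain i where "i < m" "c ! i = x" unfolding N_def m_def by (metis (no_types, lifting) in_set_conv_nth mem_Collect_eq)
        then show "x \<in> (\<lambda>i. c ! i) ` I" using x unfolding I_def by blast
      qed
      show "(\<lambda>i. c ! i) ` I \<subseteq> N" unfolding I_def by auto
    qed
    have fI: "finite I" unfolding I_def by simp
    have cardN: "card N = card I" unfolding NI
      by (rule card_image, rule inj_on_nth[OF cd]) (auto simp: I_def m_def)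
    have cardNp: "card Np = card I" unfolding Np_def using card_image[OF scinj] .
    have fN: "finite N" unfolding NI using fI by simp
    have fNp: "finite Np" unfolding Np_def using fI by simp
    have Npc: "Np \<subseteq> set c" unfolding Np_def sc_def using m0 unfolding m_def by auto
    have NpN: "Np \<inter> N = {}" unfolding Np_def using F2 by auto
    have NpH: "Np \<inter> H = {}" using Npc HW unfolding W_def by auto
    have noNpH: "\<forall>x\<in>Np. \<forall>h\<in>H. \<not> E x h"
    proof (intro ballI notI)
      fix x h assume xh: "x \<in> Np" "h \<in> H" "E x h"
      then have "x \<in> N" using Npc sym unfolding N_def by blast
      then show False using NpN xh(1) by blast
    qed
    have indep: "\<forall>x\<in>Np. \<forall>y\<in>Np. x \<noteq> y \<longrightarrow> \<not> E x y"
      unfolding Np_def using F3 by blast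
    define K where "K = card N"
    have A: "s + t \<le> card H + K"
    proof -
      have "D v \<subseteq> (H - {v}) \<union> N"
      proof
        fix u assume u: "u \<in> D v"
        then have uV: "u \<in> V" and e: "E v u" unfolding D_def by auto
        have "u \<noteq> v" using e irr by blast
        show "u \<in> (H - {v}) \<union> N"
        proof (cases "u \<in> set c")
          case True then show ?thesis using e vH unfolding N_def by blast
        next
          case False then have "u \<in> W" using uV unfolding W_def by blast
          then show ?thesis using clos[OF vH _ e] \<open>u \<noteq> v\<close> by blast
        qed
      qed
      then have "card (D v) \<le> card ((H - {v}) \<union> N)" using fH fN by (intro card_mono) auto
      also have "\<dots> \<le> card (H - {v}) + card N" by (rule card_Un_le)
      also have "card (H - {v}) = card H - 1" using vH fH by simp
      finally have "s + t - 1 \<le> card H - 1 + K" using cD[OF v(1)] unfolding K_def by simp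
      moreover have "card H \<ge> 1" using vH fH by (metis One_nat_def Suc_leI card_gt_0_iff empty_iff)
      ultimately show ?thesis using st by simp
    qed
    have HV: "H \<subseteq> V" using HW unfolding W_def by blast
    have NpV: "Np \<subseteq> V" using Npc cV' by blast
    have KNp: "card Np = K" unfolding K_def using cardN cardNp by simp
    show False
    proof (cases "s \<le> K")
      case True
      have "has_bip_hole V E s t"
        by (rule hole_indep[OF fNp fH NpV HV NpH indep noNpH]) (use True A KNp in auto)
      then show False using nh by blast
    next
      case F1: False
      show False
      proof (cases "t \<le> K")
        case True
        have "has_bip_hole V E t s"
          by (rule hole_indep[OF fNp fH NpV HV NpH indep noNpH]) (use True A KNp in auto)
        then show False using nh hole_sym sym by blast
      next
        case F2': False
        obtain w where w: "w \<in> set c" "w \<notin> N"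
        proof (cases "c ! 0 \<in> N")
          case True
          then have "0 \<in> I" unfolding I_def using m0 by simp
          then have "sc 0 \<notin> N" "sc 0 \<in> set c" using F2 Npc unfolding Np_def by auto
          then show ?thesis using that by blast
        next
          case False
          have "c ! 0 \<in> set c" using m0 unfolding m_def by (cases c) auto
          then show ?thesis using that False by blast
        qed
        have wV: "w \<in> V" using w cV' by blast
        have "insert w (D w) \<subseteq> V - H"
        proof
          fix u assume u: "u \<in> insert w (D w)"
          show "u \<in> V - H"
          proof (cases "u = w")
            case True then show ?thesis using w wV HW unfolding W_def by auto
          next
            case False
            then have "u \<in> V" "E w u" using u unfolding D_def by auto
            moreover have "u \<notin> H"
            proof
              assume "u \<in> H" then have "w \<in> N" using w(1) \<open>E w u\<close> sym unfolding N_def by blast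
              then show False using w(2) by blast
            qed
            ultimately show ?thesis by blast
          qed
        qed
        then have "card (insert w (D w)) \<le> card (V - H)" using fin by (intro card_mono) auto
        moreover have "card (insert w (D w)) = card (D w) + 1"
          using fD irr unfolding D_def by simp
        ultimately have cVH: "s + t \<le> card (V - H)" using cD[OF wV] st by simp
        have "card (V - H) - card N \<le> card (V - H - N)" using fN by (rule diff_card_le_card_Diff)
        then have c1: "t \<le> card (V - H - N)" using cVH F1 unfolding K_def by simp
        have c2: "s \<le> card H" using A F2' by simp
        have noE: "\<forall>x\<in>H. \<forall>y\<in>V - H - N. \<not> E x y"
        proof (intro ballI notI)
          fix x y assume xy: "x \<in> H" "y \<in> V - H - N" "E x y"
          show False
          proof (cases "y \<in> set c")
            case True then have "y \<in> N" using xy unfolding N_def by blast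
            then show False using xy by blast
          next
            case False then have "y \<in> W" using xy unfolding W_def by blast
            then show False using clos[OF xy(1) _ xy(3)] xy(2) by blast
          qed
        qed
        have "has_bip_hole V E s t"
          by (rule hole_from[OF fH _ HV _ _ c2 c1 noE]) (use fin in auto)
        then show False using nh by blast
      qed
    qed
  qed
  then show ?thesis unfolding hamilton_cycle_def using cd c3 cc unfolding cycE_def by blast
qed



lemma bhn_ex:
  assumes "finite V"
  shows "\<exists>r'. \<exists>s t. s \<ge> 1 \<and> t \<ge> 1 \<and> r' = s + t - 1 \<and> \<not> has_bip_hole V E s t"
proof -
  have nh: "\<not> has_bip_hole V E (card V + 1) 1"
  proof
    assume "has_bip_hole V E (card V + 1) 1"
    then obtain S where S: "S \<subseteq> V" "card S = card V + 1" unfolding has_bip_hole_def by blast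
    have "card S \<le> card V" using card_mono[OF assms S(1)] .
    then show False using S(2) by simp
  qed
  have "(card V + 1) \<ge> 1 \<and> (1::nat) \<ge> 1 \<and> card V + 1 + 1 - 1 = (card V + 1) + 1 - 1 \<and> \<not> has_bip_hole V E (card V + 1) 1"
    using nh by simp
  then show ?thesis by blast
qed

lemma bhn_props:
  assumes "finite V"
  obtains s t where "s \<ge> 1" "t \<ge> 1" "bip_hole_number V E = s + t - 1" "\<not> has_bip_hole V E s t"
proof -
  have "\<exists>s t. s \<ge> 1 \<and> t \<ge> 1 \<and> bip_hole_number V E = s + t - 1 \<and> \<not> has_bip_hole V E s t"
    unfolding bip_hole_number_def by (rule LeastI_ex[OF bhn_ex[OF assms, of E]])
  then show ?thesis using that by blast
qed

lemma bhn_le: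
  assumes "s \<ge> 1" "t \<ge> 1" "\<not> has_bip_hole V E s t"
  shows "bip_hole_number V E \<le> s + t - 1"
proof -
  have "\<exists>s' t'. s' \<ge> 1 \<and> t' \<ge> 1 \<and> s + t - 1 = s' + t' - 1 \<and> \<not> has_bip_hole V E s' t'"
    using assms by blast
  then show ?thesis unfolding bip_hole_number_def by (rule Least_le)
qed

lemma min_degree_le:
  assumes "finite V" "v \<in> V"
  shows "min_degree V E \<le> degree V E v"
  unfolding min_degree_def using assms by (intro Min_le) auto

lemma min_degree_in:
  assumes "finite V" "V \<noteq> {}"
  shows "\<exists>v\<in>V. min_degree V E = degree V E v"
proof -
  have "Min (degree V E ` V) \<in> degree V E ` V" using assms by (intro Min_in) auto
  then show ?thesis unfolding min_degree_def by auto
qed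

lemma ham_from_bhn:
  assumes sg: "simple_graph V E" and cV: "3 \<le> card V" and le: "bip_hole_number V E \<le> min_degree V E"
  shows "\<exists>xs. hamilton_cycle V E xs"
proof -
  have fin: "finite V" using sg unfolding simple_graph_def by auto
  obtain s t where st: "s \<ge> 1" "t \<ge> 1" "bip_hole_number V E = s + t - 1" "\<not> has_bip_hole V E s t"
    using bhn_props[OF fin] by blast
  have "\<forall>v\<in>V. s + t - 1 \<le> degree V E v"
  proof
    fix v assume "v \<in> V"
    then have "min_degree V E \<le> degree V E v" using min_degree_le[OF fin] by blast
    then show "s + t - 1 \<le> degree V E v" using le st(3) by simp
  qed
  then show ?thesis using hamiltonian[OF sg cV st(1,2,4)] by blast
qed

lemma cyc_edges_at:
  assumes "distinct xs"
  shows "card {u. {v, u} \<in> cycle_edges xs} \<le> 2"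
proof (cases "v \<in> set xs")
  case False
  have "{u. {v, u} \<in> cycle_edges xs} = {}"
  proof (rule ccontr)
    assume "{u. {v, u} \<in> cycle_edges xs} \<noteq> {}"
    then obtain u i where i: "i < length xs" "{v, u} = {xs ! i, xs ! ((i + 1) mod length xs)}"
      unfolding cycle_edges_def by blast
    then have "v \<in> {xs ! i, xs ! ((i + 1) mod length xs)}" by blast
    moreover have "(i + 1) mod length xs < length xs"
    proof -
      have "length xs > 0" using i(1) by (cases xs) auto
      then show ?thesis by simp
    qed
    ultimately have "v \<in> set xs" using i(1) nth_mem by blast
    then show False using False by blast
  qed
  then show ?thesis by simp
next
  case True
  define n where "n = length xs"
  obtain p where p: "p < n" "xs ! p = v" using True unfolding n_def by (metis in_set_conv_nth)
  have "{u. {v, u} \<in> cycle_edges xs} \<subseteq> {xs ! ((p + 1) mod n), xs ! ((p + n - 1) mod n)}"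
  proof
    fix u assume "u \<in> {u. {v, u} \<in> cycle_edges xs}"
    then obtain i where i: "i < n" "{v, u} = {xs ! i, xs ! ((i + 1) mod n)}"
      unfolding cycle_edges_def n_def by blast
    have n0: "n > 0" using i by simp
    have i1: "(i + 1) mod n < n" using n0 by simp
    from i(2) have "(v = xs ! i \<and> u = xs ! ((i + 1) mod n)) \<or> (v = xs ! ((i + 1) mod n) \<and> u = xs ! i)"
      unfolding doubleton_eq_iff by blast
    then show "u \<in> {xs ! ((p + 1) mod n), xs ! ((p + n - 1) mod n)}"
    proof
      assume a: "v = xs ! i \<and> u = xs ! ((i + 1) mod n)"
      then have "i = p" using p i assms unfolding n_def by (metis nth_eq_iff_index_eq)
      then show ?thesis using a by simp
    next
      assume a: "v = xs ! ((i + 1) mod n) \<and> u = xs ! i"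
      then have ip: "(i + 1) mod n = p" using p i1 assms unfolding n_def by (metis nth_eq_iff_index_eq)
      have "i = (p + n - 1) mod n"
      proof (cases "i + 1 < n")
        case True
        then have "p = i + 1" using ip by simp
        then have "p + n - 1 = i + n" by simp
        then show ?thesis using i(1) by simp
      next
        case False
        then have "i + 1 = n" using i by simp
        then have "p = 0" using ip by simp
        then show ?thesis using \<open>i + 1 = n\<close> by simp
      qed
      then show ?thesis using a by simp
    qed
  qed
  then have "card {u. {v, u} \<in> cycle_edges xs} \<le> card {xs ! ((p + 1) mod n), xs ! ((p + n - 1) mod n)}"
    by (intro card_mono) auto
  also have "\<dots> \<le> 2" by (simp add: card_insert_le_m1)
  finally show ?thesis .
qed



lemma cyc_edges_at_fin:
  "finite {u. {v, u} \<in> cycle_edges xs}"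
proof (rule finite_subset[of _ "set xs"])
  show "{u. {v, u} \<in> cycle_edges xs} \<subseteq> set xs"
  proof
    fix u assume "u \<in> {u. {v, u} \<in> cycle_edges xs}"
    then obtain i where i: "i < length xs" "{v, u} = {xs ! i, xs ! ((i + 1) mod length xs)}"
      unfolding cycle_edges_def by blast
    have "length xs > 0" using i(1) by (cases xs) auto
    then have "(i + 1) mod length xs < length xs" by simp
    moreover have "u \<in> {xs ! i, xs ! ((i + 1) mod length xs)}" using i(2) by blast
    ultimately show "u \<in> set xs" using i(1) nth_mem by blast
  qed
qed simp

definition Fset :: "(nat \<Rightarrow> 'a list) \<Rightarrow> nat \<Rightarrow> 'a \<Rightarrow> 'a set" where
  "Fset C k v = (\<Union>i<k. {u. {v, u} \<in> cycle_edges (C i)})"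

lemma Fset_card:
  assumes "\<forall>i<k. distinct (C i)"
  shows "finite (Fset C k v) \<and> card (Fset C k v) \<le> 2 * k"
proof
  show "finite (Fset C k v)" unfolding Fset_def by (intro finite_UN_I) (simp_all add: cyc_edges_at_fin)
  have "card (Fset C k v) \<le> (\<Sum>i<k. card {u. {v, u} \<in> cycle_edges (C i)})"
    unfolding Fset_def by (rule card_UN_le) simp
  also have "\<dots> \<le> (\<Sum>i<k. 2)"
  proof (rule sum_mono)
    fix i assume "i \<in> {..<k}"
    then have "distinct (C i)" using assms by simp
    then show "card {u. {v, u} \<in> cycle_edges (C i)} \<le> 2" by (rule cyc_edges_at)
  qed
  finally show "card (Fset C k v) \<le> 2 * k" by simp
qed

lemma removed_graph:
  fixes C :: "nat \<Rightarrow> 'a list"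
  assumes sg: "simple_graph V E" and ham: "\<forall>i<k. hamilton_cycle V E (C i)"
    and E'_def: "E' = (\<lambda>x y. E x y \<and> {x, y} \<notin> (\<Union>i<k. cycle_edges (C i)))"
  shows "simple_graph V E'"
    and "\<And>v. degree V E v \<le> degree V E' v + 2 * k"
    and "\<And>s t. s \<ge> 1 \<Longrightarrow> \<not> has_bip_hole V E s t \<Longrightarrow> \<not> has_bip_hole V E' s (t + 2 * k * s)"
proof -
  have fin: "finite V" and sym: "\<forall>x y. E x y \<longrightarrow> E y x"
    using sg unfolding simple_graph_def by auto
  have dC: "\<forall>i<k. distinct (C i)" using ham unfolding hamilton_cycle_def by blast
  note Fc = Fset_card[OF dC]
  have rem: "u \<in> Fset C k v" if "E v u" "\<not> E' v u" for u v
    using that unfolding E'_def Fset_def by blast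
  show "simple_graph V E'" using sg unfolding simple_graph_def E'_def by (auto simp: insert_commute)
  show "degree V E v \<le> degree V E' v + 2 * k" for v
  proof -
    have "{u \<in> V. E v u} \<subseteq> {u \<in> V. E' v u} \<union> Fset C k v" using rem by blast
    then have "card {u \<in> V. E v u} \<le> card ({u \<in> V. E' v u} \<union> Fset C k v)"
      using fin Fc by (intro card_mono) auto
    also have "\<dots> \<le> card {u \<in> V. E' v u} + card (Fset C k v)" by (rule card_Un_le)
    finally show ?thesis unfolding degree_def using Fc[of v] by simp
  qed
  show "\<not> has_bip_hole V E' s (t + 2 * k * s)" if st: "s \<ge> 1" "\<not> has_bip_hole V E s t" for s t
  proof
    assume "has_bip_hole V E' s (t + 2 * k * s)"
    then obtain S T' where h: "S \<subseteq> V" "T' \<subseteq> V" "S \<inter> T' = {}" "card S = s" "card T' = t + 2 * k * s"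
      "\<forall>x\<in>S. \<forall>y\<in>T'. \<not> E' x y" unfolding has_bip_hole_def by blast
    define U where "U = (\<Union>x\<in>S. Fset C k x)"
    have fS: "finite S" using h(1) fin finite_subset by blast
    have "card U \<le> (\<Sum>x\<in>S. card (Fset C k x))" unfolding U_def by (rule card_UN_le[OF fS])
    also have "\<dots> \<le> (\<Sum>x\<in>S. 2 * k)" using Fc by (intro sum_mono) auto
    finally have cU: "card U \<le> 2 * k * s" using h(4) by (simp add: mult.commute)
    have fU: "finite U" unfolding U_def using fS Fc by blast
    have "card T' - card U \<le> card (T' - U)" using fU by (rule diff_card_le_card_Diff)
    then have c1: "t \<le> card (T' - U)" using cU h(5) by simp
    have noE: "\<forall>x\<in>S. \<forall>y\<in>T' - U. \<not> E x y"
    proof (intro ballI notI)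
      fix x y assume xy: "x \<in> S" "y \<in> T' - U" "E x y"
      then have "\<not> E' x y" using h(6) by blast
      then have "y \<in> Fset C k x" using rem xy(3) by blast
      then show False using xy unfolding U_def by blast
    qed
    have fT: "finite (T' - U)" using h(2) fin by (meson Diff_subset finite_subset subset_trans)
    have "has_bip_hole V E s t"
      by (rule hole_from[OF fS fT h(1) _ _ _ c1 noE]) (use h in auto)
    then show False using st by blast
  qed
qed



lemma step:
  fixes C :: "nat \<Rightarrow> 'a list"
  assumes sg: "simple_graph V E" and cV: "3 \<le> card V"
    and md: "min_degree V E \<ge> (r + 1) * bip_hole_number V E + 3 * r"
    and kr: "k \<le> r"
    and ham: "\<forall>i<k. hamilton_cycle V E (C i)"
  shows "\<exists>xs. hamilton_cycle V E xs \<and> (\<forall>i<k. cycle_edges xs \<inter> cycle_edges (C i) = {})"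
proof -
  define E' where "E' = (\<lambda>x y. E x y \<and> {x, y} \<notin> (\<Union>i<k. cycle_edges (C i)))"
  note rg = removed_graph[OF sg ham E'_def]
  have fin: "finite V" and sym: "\<forall>x y. E x y \<longrightarrow> E y x" using sg unfolding simple_graph_def by auto
  obtain s0 t0 where st0: "s0 \<ge> 1" "t0 \<ge> 1" "bip_hole_number V E = s0 + t0 - 1" "\<not> has_bip_hole V E s0 t0"
    using bhn_props[OF fin] by blast
  obtain s t where st: "s \<ge> 1" "t \<ge> 1" "bip_hole_number V E = s + t - 1" "\<not> has_bip_hole V E s t" "s \<le> t"
  proof (cases "s0 \<le> t0")
    case True then show ?thesis using that st0 by blast
  next
    case False
    have "\<not> has_bip_hole V E t0 s0" using st0(4) hole_sym sym by blast
    then show ?thesis using that[of t0 s0] st0 False by simp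
  qed
  define a where "a = s + t - 1"
  have a1: "s + t = a + 1" using st unfolding a_def by simp
  have bE': "bip_hole_number V E' \<le> s + (t + 2 * k * s) - 1"
    using bhn_le[of s "t + 2 * k * s" V E'] rg(3)[OF st(1) st(4)] st by simp
  have "V \<noteq> {}" using cV by auto
  then obtain v0 where v0: "v0 \<in> V" "min_degree V E' = degree V E' v0" using min_degree_in[OF fin] by blast
  have d1: "degree V E v0 \<le> degree V E' v0 + 2 * k" using rg(2) .
  have d2: "min_degree V E \<le> degree V E v0" using min_degree_le[OF fin v0(1)] .
  have m1: "(k + 1) * a \<le> (r + 1) * a" using kr by (intro mult_right_mono) auto
  have m2: "k * (2 * s) \<le> k * (a + 1)" using st(5) a1 by (intro mult_left_mono) auto
  have "bip_hole_number V E' \<le> a + 2 * k * s" using bE' a1 by simp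
  also have "\<dots> \<le> (k + 1) * a + k" using m2 by (simp add: algebra_simps)
  also have "\<dots> \<le> min_degree V E'"
  proof -
    have m1': "a * k \<le> a * r" using kr by (simp add: mult_left_mono)
    have "(r + 1) * a + 3 * r \<le> min_degree V E" using md st(3) unfolding a_def by simp
    then have "a + a * r + 3 * r \<le> degree V E' v0 + 2 * k" using d1 d2 by (simp add: algebra_simps)
    moreover have "(k + 1) * a + k = a * k + a + k" by (simp add: algebra_simps)
    ultimately show ?thesis using m1' kr v0(2) by linarith
  qed
  finally obtain xs where xs: "hamilton_cycle V E' xs"
    using ham_from_bhn[OF rg(1) cV] by blast
  have "hamilton_cycle V E xs" using xs unfolding hamilton_cycle_def E'_def by blast
  moreover have "cycle_edges xs \<inter> cycle_edges (C i) = {}" if i: "i < k" for i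
  proof -
    have "e \<notin> cycle_edges (C i)" if e: "e \<in> cycle_edges xs" for e
    proof -
      obtain j where j: "j < length xs" "e = {xs ! j, xs ! ((j + 1) mod length xs)}"
        using e unfolding cycle_edges_def by blast
      have "E' (xs ! j) (xs ! ((j + 1) mod length xs))" using xs j(1) unfolding hamilton_cycle_def by blast
      then show ?thesis using i j(2) unfolding E'_def by blast
    qed
    then show ?thesis by blast
  qed
  ultimately show ?thesis by blast
qed

theorem theorem3:
  fixes V :: "'a set" and E :: "'a \<Rightarrow> 'a \<Rightarrow> bool" and r :: nat
  assumes "simple_graph V E"
    and "card V \<ge> 3"
    and "min_degree V E \<ge> (r + 1) * bip_hole_number V E + 3 * r"
  shows "\<exists>C :: nat \<Rightarrow> 'a list.
           (\<forall>i \<le> r. hamilton_cycle V E (C i)) \<and>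
           (\<forall>i \<le> r. \<forall>j \<le> r. i \<noteq> j \<longrightarrow> cycle_edges (C i) \<inter> cycle_edges (C j) = {})"
proof -
  have main: "k \<le> r + 1 \<Longrightarrow> \<exists>C :: nat \<Rightarrow> 'a list. (\<forall>i<k. hamilton_cycle V E (C i)) \<and>
      (\<forall>i<k. \<forall>j<k. i \<noteq> j \<longrightarrow> cycle_edges (C i) \<inter> cycle_edges (C j) = {})" for k
  proof (induction k)
    case 0 then show ?case by simp
  next
    case (Suc k)
    then obtain C :: "nat \<Rightarrow> 'a list" where C: "\<forall>i<k. hamilton_cycle V E (C i)"
      "\<forall>i<k. \<forall>j<k. i \<noteq> j \<longrightarrow> cycle_edges (C i) \<inter> cycle_edges (C j) = {}" by auto
    have kr: "k \<le> r" using Suc(2) by simp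
    obtain xs where xs: "hamilton_cycle V E xs" "\<forall>i<k. cycle_edges xs \<inter> cycle_edges (C i) = {}"
      using step[OF assms kr C(1)] by blast
    define C' where "C' = C(k := xs)"
    have "\<forall>i<Suc k. hamilton_cycle V E (C' i)" using C(1) xs(1) unfolding C'_def by (auto simp: less_Suc_eq)
    moreover have "\<forall>i<Suc k. \<forall>j<Suc k. i \<noteq> j \<longrightarrow> cycle_edges (C' i) \<inter> cycle_edges (C' j) = {}"
      using C(2) xs(2) unfolding C'_def by (auto simp: less_Suc_eq)
    ultimately show ?case by blast
  qed
  obtain C :: "nat \<Rightarrow> 'a list" where C: "\<forall>i<r+1. hamilton_cycle V E (C i)"
      "\<forall>i<r+1. \<forall>j<r+1. i \<noteq> j \<longrightarrow> cycle_edges (C i) \<inter> cycle_edges (C j) = {}"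
    using main[of "r + 1"] by blast
  show ?thesis using C by (intro exI[of _ C]) (simp add: less_Suc_eq_le)
qed

end
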